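(* Let $A>0$. For every $w\ge 0$ the initial value problem $$v'(t)=-v(t)^2\Big(\sqrt{A^2t^2+w}+v(t)\Big),\qquad v(0)=1,$$ has a unique solution $v(\cdot;w)\in C^1([0,\infty))$ defined on all of $[0,\infty)$, and it takes values in $(0,1]$. Moreover: (1) for fixed $w$, $t\mapsto v(t;w)$ is strictly decreasing on $[0,\infty)$; for fixed $t>0$, $w\mapsto v(t;w)$ is strictly decreasing on $[0,\infty)$; (2) for all $t>0$ and $w\ge0$, $$v(t;w)<\frac{2}{2+t\sqrt{A^2t^2+w}};$$ in particular $v(t;w)\to0$ as $t\to\infty$; (3) the map $w\mapsto v(\cdot;w)$ is continuous from $[0,\infty)$ into $L^\infty(0,\infty)$.
   Context: $A>0$ is a fixed constant (a dimensionless parameter of a model of a viscous jet falling under gravity onto a moving belt). *)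

theory Defs
  imports "HOL-Analysis.Analysis"
begin

definition ivp_sol :: "real \<Rightarrow> real \<Rightarrow> (real \<Rightarrow> real) \<Rightarrow> bool" where
  "ivp_sol A w v \<longleftrightarrow> v 0 = 1 \<and>
     (\<exists>v'. continuous_on {0..} v' \<and>
        (\<forall>t\<ge>0. (v has_real_derivative v' t) (at t within {0..}) \<and>
                 v' t = - (v t)\<^sup>2 * (sqrt (A\<^sup>2 * t\<^sup>2 + w) + v t)))"

end

theory Submission
  imports Defs
begin



lemma within_ext:
  fixes f :: "real \<Rightarrow> real"
  assumes "0 \<le> x" "x < T" "(f has_real_derivative D) (at x within {0..T})"
  shows "(f has_real_derivative D) (at x within {0..})"
proof -
  have "at x within {0..} = at x within {0..T}"
    by (rule at_within_nhd[of x "{..<T}"]) (use assms in auto)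
  then show ?thesis using assms by simp
qed

lemma prim_deriv:
  fixes f :: "real \<Rightarrow> real"
  assumes "continuous_on {0..} f" "0 \<le> t"
  shows "((\<lambda>x. integral {0..x} f) has_real_derivative f t) (at t within {0..})"
proof -
  have "((\<lambda>x. integral {0..x} f) has_real_derivative f t) (at t within {0..t+1})"
    by (rule integral_has_real_derivative) (use assms in \<open>auto intro: continuous_on_subset\<close>)
  then show ?thesis using within_ext[of t "t+1" "\<lambda>x. integral {0..x} f" "f t"] assms by simp
qed

lemma d0_cont:
  fixes f :: "real \<Rightarrow> real"
  assumes "\<And>x. 0 \<le> x \<Longrightarrow> (f has_real_derivative f' x) (at x within {0..})"
  shows "continuous_on {0..} f"
  unfolding continuous_on_eq_continuous_within
  using assms by (auto intro: DERIV_continuous)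

lemma d0_at:
  fixes f :: "real \<Rightarrow> real"
  assumes "0 < x" "(f has_real_derivative D) (at x within {0..})"
  shows "(f has_real_derivative D) (at x)"
proof -
  have "at x within {0..} = at x" by (rule at_within_interior) (use assms in auto)
  then show ?thesis using assms by simp
qed

lemma mono_le:
  fixes f :: "real \<Rightarrow> real"
  assumes d: "\<And>x. 0 \<le> x \<Longrightarrow> (f has_real_derivative f' x) (at x within {0..})"
    and "0 \<le> a" "a \<le> b" and p: "\<And>x. a < x \<Longrightarrow> x < b \<Longrightarrow> 0 \<le> f' x"
  shows "f a \<le> f b"
proof (rule DERIV_nonneg_imp_increasing_open[of a b f])
  show "continuous_on {a..b} f"
    using d0_cont[OF d] by (rule continuous_on_subset) (use assms in auto)
  fix x assume "a < x" "x < b"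
  then show "\<exists>y. DERIV f x :> y \<and> 0 \<le> y"
    using d0_at[OF _ d, of x] p assms(2) by auto
qed (use assms in auto)

lemma mono_lt:
  fixes f :: "real \<Rightarrow> real"
  assumes d: "\<And>x. 0 \<le> x \<Longrightarrow> (f has_real_derivative f' x) (at x within {0..})"
    and "0 \<le> a" "a < b" and p: "\<And>x. a < x \<Longrightarrow> x < b \<Longrightarrow> 0 < f' x"
  shows "f a < f b"
proof (rule DERIV_pos_imp_increasing_open[of a b f])
  show "continuous_on {a..b} f"
    using d0_cont[OF d] by (rule continuous_on_subset) (use assms in auto)
  fix x assume "a < x" "x < b"
  then show "\<exists>y. DERIV f x :> y \<and> 0 < y"
    using d0_at[OF _ d, of x] p assms(2) by auto
qed (use assms in auto)

lemma compare:
  fixes f F :: "real \<Rightarrow> real"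
  assumes df: "\<And>x. 0 \<le> x \<Longrightarrow> (f has_real_derivative f' x) (at x within {0..})"
    and dF: "\<And>x. 0 \<le> x \<Longrightarrow> (F has_real_derivative F' x) (at x within {0..})"
    and "f 0 = 0" "F 0 = 0" "0 \<le> t" and b: "\<And>x. 0 < x \<Longrightarrow> x < t \<Longrightarrow> \<bar>f' x\<bar> \<le> F' x"
  shows "\<bar>f t\<bar> \<le> F t"
proof -
  have "(\<lambda>x. F x - f x) 0 \<le> (\<lambda>x. F x - f x) t"
    by (rule mono_le[where f'="\<lambda>x. F' x - f' x"]) 
       (use assms in \<open>auto intro!: DERIV_diff dest: b\<close>)
  moreover have "(\<lambda>x. F x + f x) 0 \<le> (\<lambda>x. F x + f x) t"
    by (rule mono_le[where f'="\<lambda>x. F' x + f' x"]) 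
       (use assms in \<open>auto intro!: DERIV_add dest: b\<close>)
  ultimately show ?thesis using assms by auto
qed




definition gf :: "real \<Rightarrow> real \<Rightarrow> real \<Rightarrow> real \<Rightarrow> real" where
  "gf A w t x = sqrt (A\<^sup>2 * t\<^sup>2 + w) + 1 / max x 1"

primrec pic :: "real \<Rightarrow> real \<Rightarrow> nat \<Rightarrow> real \<Rightarrow> real" where
  "pic A w 0 = (\<lambda>t. 1)"
| "pic A w (Suc n) = (\<lambda>t. 1 + integral {0..t} (\<lambda>\<tau>. gf A w \<tau> (pic A w n \<tau>)))"

lemma gf_cont:
  assumes "continuous_on S p"
  shows "continuous_on S (\<lambda>\<tau>. gf A w \<tau> (p \<tau>))"
  unfolding gf_def
  by (intro continuous_intros assms) auto

lemma pic_deriv: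
  assumes "continuous_on {0..} (pic A w n)" "0 \<le> t"
  shows "(pic A w (Suc n) has_real_derivative gf A w t (pic A w n t)) (at t within {0..})"
proof -
  have "((\<lambda>x. integral {0..x} (\<lambda>\<tau>. gf A w \<tau> (pic A w n \<tau>))) has_real_derivative gf A w t (pic A w n t)) (at t within {0..})"
    by (rule prim_deriv[OF gf_cont[OF assms(1)] assms(2)])
  then have "((\<lambda>x. 1 + integral {0..x} (\<lambda>\<tau>. gf A w \<tau> (pic A w n \<tau>))) has_real_derivative 0 + gf A w t (pic A w n t)) (at t within {0..})"
    by (intro DERIV_add) auto
  then show ?thesis by simp
qed

lemma pic_cont: "continuous_on {0..} (pic A w n)"
proof (induction n)
  case 0 then show ?case by simp
next
  case (Suc n)
  show ?case by (rule d0_cont[OF pic_deriv[OF Suc]])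
qed

lemma pic_deriv': "0 \<le> t \<Longrightarrow> (pic A w (Suc n) has_real_derivative gf A w t (pic A w n t)) (at t within {0..})"
  by (rule pic_deriv[OF pic_cont])

lemma pic_zero: "pic A w n 0 = 1"
  by (cases n) auto

lemma inv_lip: "1 \<le> (a::real) \<Longrightarrow> 1 \<le> b \<Longrightarrow> \<bar>1/a - 1/b\<bar> \<le> \<bar>a - b\<bar>"
proof -
  assume a: "1 \<le> a" and b: "1 \<le> b"
  have ab: "1 \<le> a*b" using mult_mono[OF a b] a by simp
  have "\<bar>1/a - 1/b\<bar> = \<bar>a - b\<bar> / (a*b)" using a b by (simp add: field_simps abs_div)
  also have "\<dots> \<le> \<bar>a - b\<bar> / 1" by (rule divide_left_mono) (use ab in auto)
  finally show ?thesis by simp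
qed

lemma gf_lip: "\<bar>gf A w t x - gf A w t y\<bar> \<le> \<bar>x - y\<bar>"
proof -
  have "\<bar>gf A w t x - gf A w t y\<bar> = \<bar>1 / max x 1 - 1 / max y 1\<bar>" by (simp add: gf_def)
  also have "\<dots> \<le> \<bar>max x 1 - max y 1\<bar>" by (rule inv_lip) auto
  also have "\<dots> \<le> \<bar>x - y\<bar>" by (auto simp: max_def)
  finally show ?thesis .
qed

lemma sqrt_mono_t: "0 \<le> t \<Longrightarrow> t \<le> T \<Longrightarrow> sqrt (A\<^sup>2 * t\<^sup>2 + w) \<le> sqrt (A\<^sup>2 * T\<^sup>2 + w)"
  by (simp add: mult_left_mono power_mono)

lemma poly_deriv:
  "((\<lambda>t. M * t ^ Suc k / fact (Suc k)) has_real_derivative M * x ^ k / fact k) (at x within S)"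
proof -
  have "((\<lambda>t. M * t ^ Suc k / fact (Suc k)) has_real_derivative M * (real (Suc k) * x ^ k) / fact (Suc k)) (at x within S)"
    by (intro derivative_eq_intros) auto
  also have "M * (real (Suc k) * x ^ k) / fact (Suc k) = M * x ^ k / fact k"
    by (simp add: fact_Suc field_simps del: of_nat_Suc)
  finally show ?thesis .
qed

lemma pic_bound:
  assumes "0 \<le> w" "0 \<le> t" "t \<le> T"
  shows "\<bar>pic A w (Suc n) t - pic A w n t\<bar> \<le> (sqrt (A\<^sup>2 * T\<^sup>2 + w) + 1) * t ^ Suc n / fact (Suc n)"
  using assms(2,3)
proof (induction n arbitrary: t)
  case 0
  let ?M = "sqrt (A\<^sup>2 * T\<^sup>2 + w) + 1"
  have "\<bar>(\<lambda>t. pic A w (Suc 0) t - pic A w 0 t) t\<bar> \<le> (\<lambda>t. ?M * t ^ Suc 0 / fact (Suc 0)) t"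
  proof (rule compare[where f="\<lambda>t. pic A w (Suc 0) t - pic A w 0 t" and F="\<lambda>t. ?M * t ^ Suc 0 / fact (Suc 0)" and t=t and f'="\<lambda>x. gf A w x (pic A w 0 x) - 0" and F'="\<lambda>x. ?M * x ^ 0 / fact 0"])
    fix x :: real assume "0 \<le> x"
    show "((\<lambda>t. pic A w (Suc 0) t - pic A w 0 t) has_real_derivative gf A w x (pic A w 0 x) - 0) (at x within {0..})"
      using pic_deriv'[OF \<open>0 \<le> x\<close>, of A w 0] by (intro DERIV_diff) auto
    show "((\<lambda>t. ?M * t ^ Suc 0 / fact (Suc 0)) has_real_derivative ?M * x ^ 0 / fact 0) (at x within {0..})"
      by (rule poly_deriv)
  next
    fix x assume x: "0 < x" "x < t"
    have "sqrt (A\<^sup>2 * x\<^sup>2 + w) \<le> sqrt (A\<^sup>2 * T\<^sup>2 + w)" by (rule sqrt_mono_t) (use x 0 in auto)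
    then show "\<bar>gf A w x (pic A w 0 x) - 0\<bar> \<le> ?M * x ^ 0 / fact 0"
      using assms(1) by (simp add: gf_def)
  qed (use 0 in \<open>simp_all add: pic_zero\<close>)
  then show ?case by simp
next
  case (Suc n)
  let ?M = "sqrt (A\<^sup>2 * T\<^sup>2 + w) + 1"
  have "\<bar>(\<lambda>t. pic A w (Suc (Suc n)) t - pic A w (Suc n) t) t\<bar> \<le> (\<lambda>t. ?M * t ^ Suc (Suc n) / fact (Suc (Suc n))) t"
  proof (rule compare[where f="\<lambda>t. pic A w (Suc (Suc n)) t - pic A w (Suc n) t" and F="\<lambda>t. ?M * t ^ Suc (Suc n) / fact (Suc (Suc n))" and t=t and f'="\<lambda>x. gf A w x (pic A w (Suc n) x) - gf A w x (pic A w n x)" and F'="\<lambda>x. ?M * x ^ Suc n / fact (Suc n)"])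
    fix x :: real assume "0 \<le> x"
    show "((\<lambda>t. pic A w (Suc (Suc n)) t - pic A w (Suc n) t) has_real_derivative gf A w x (pic A w (Suc n) x) - gf A w x (pic A w n x)) (at x within {0..})"
      using pic_deriv'[OF \<open>0 \<le> x\<close>, of A w "Suc n"] pic_deriv'[OF \<open>0 \<le> x\<close>, of A w n] by (intro DERIV_diff) auto
    show "((\<lambda>t. ?M * t ^ Suc (Suc n) / fact (Suc (Suc n))) has_real_derivative ?M * x ^ Suc n / fact (Suc n)) (at x within {0..})"
      by (rule poly_deriv)
  next
    fix x assume x: "0 < x" "x < t"
    have "\<bar>gf A w x (pic A w (Suc n) x) - gf A w x (pic A w n x)\<bar> \<le> \<bar>pic A w (Suc n) x - pic A w n x\<bar>"
      by (rule gf_lip)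
    also have "\<dots> \<le> ?M * x ^ Suc n / fact (Suc n)" by (rule Suc.IH) (use x Suc.prems in auto)
    finally show "\<bar>gf A w x (pic A w (Suc n) x) - gf A w x (pic A w n x)\<bar> \<le> ?M * x ^ Suc n / fact (Suc n)" .
  qed (use Suc.prems in \<open>simp_all add: pic_zero\<close>)
  then show ?case by simp
qed




definition pu :: "real \<Rightarrow> real \<Rightarrow> real \<Rightarrow> real" where
  "pu A w t = 1 + (\<Sum>k. pic A w (Suc k) t - pic A w k t)"

lemma pic_unif:
  assumes "0 \<le> w" "0 \<le> T" "0 < e"
  shows "\<exists>N. \<forall>n\<ge>N. \<forall>x\<in>{0..T}. \<bar>pic A w n x - pu A w x\<bar> < e"
proof -
  define M where "M = sqrt (A\<^sup>2 * T\<^sup>2 + w) + 1"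
  have M0: "0 \<le> M" unfolding M_def using assms(1) by (intro add_nonneg_nonneg real_sqrt_ge_zero) auto
  have "summable (\<lambda>k. inverse (fact k) * T ^ k)" by (rule summable_exp)
  then have "summable (\<lambda>k. inverse (fact (Suc k)) * T ^ (Suc k))"
    by (subst summable_Suc_iff)
  then have "summable (\<lambda>k. M * (inverse (fact (Suc k)) * T ^ (Suc k)))"
    by (rule summable_mult)
  then have sm: "summable (\<lambda>k. M * T ^ Suc k / fact (Suc k))"
    by (simp add: field_simps)
  have ul: "uniform_limit {0..T} (\<lambda>n x. \<Sum>i<n. pic A w (Suc i) x - pic A w i x)
      (\<lambda>x. \<Sum>i. pic A w (Suc i) x - pic A w i x) sequentially"
  proof (rule Weierstrass_m_test[OF _ sm])
    fix n x assume x: "x \<in> {0..T}"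
    have "\<bar>pic A w (Suc n) x - pic A w n x\<bar> \<le> M * x ^ Suc n / fact (Suc n)"
      unfolding M_def by (rule pic_bound) (use assms x in auto)
    also have "\<dots> \<le> M * T ^ Suc n / fact (Suc n)"
      using x M0 by (intro divide_right_mono mult_left_mono power_mono) auto
    finally show "norm (pic A w (Suc n) x - pic A w n x) \<le> M * T ^ Suc n / fact (Suc n)" by simp
  qed
  have tel: "(\<Sum>i<n. pic A w (Suc i) x - pic A w i x) = pic A w n x - 1" for n x
    by (subst sum_lessThan_telescope) simp
  from ul[unfolded uniform_limit_sequentially_iff, rule_format, OF assms(3)]
  obtain N where N: "\<And>n x. n \<ge> N \<Longrightarrow> x \<in> {0..T} \<Longrightarrow>
      dist (\<Sum>i<n. pic A w (Suc i) x - pic A w i x) (\<Sum>i. pic A w (Suc i) x - pic A w i x) < e"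
    by blast
  show ?thesis
  proof (intro exI allI impI ballI)
    fix n x assume "N \<le> n" "x \<in> {0..T}"
    from N[OF this] show "\<bar>pic A w n x - pu A w x\<bar> < e"
      by (simp add: tel pu_def dist_real_def del: pic.simps)
  qed
qed

lemma pic_lim:
  assumes "0 \<le> w" "0 \<le> x"
  shows "(\<lambda>n. pic A w n x) \<longlonglongrightarrow> pu A w x"
  unfolding LIMSEQ_iff
proof (intro allI impI)
  fix r :: real assume "0 < r"
  from pic_unif[OF assms(1) assms(2) this, of A] obtain N where
    "\<forall>n\<ge>N. \<forall>y\<in>{0..x}. \<bar>pic A w n y - pu A w y\<bar> < r" by blast
  then show "\<exists>no. \<forall>n\<ge>no. norm (pic A w n x - pu A w x) < r"
    using assms by (intro exI[of _ N]) auto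
qed

lemma pu_deriv:
  assumes "0 \<le> w" "0 \<le> x"
  shows "(pu A w has_real_derivative gf A w x (pu A w x)) (at x within {0..})"
proof -
  define T where "T = x + 1"
  have T0: "0 \<le> T" using assms unfolding T_def by simp
  have "\<exists>G. \<forall>y\<in>{0..T}. (\<lambda>n. pic A w (Suc n) y) \<longlonglongrightarrow> G y \<and>
      (G has_derivative (*) (gf A w y (pu A w y))) (at y within {0..T})"
  proof (rule has_derivative_sequence[of "{0..T}" "\<lambda>n. pic A w (Suc n)" "\<lambda>n y. (*) (gf A w y (pic A w n y))" "\<lambda>y. (*) (gf A w y (pu A w y))" 0 1])
    show "convex {0..T}" by simp
    fix n y assume y: "y \<in> {0..T}"
    have "(pic A w (Suc n) has_real_derivative gf A w y (pic A w n y)) (at y within {0..})"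
      by (rule pic_deriv') (use y in auto)
    then have "(pic A w (Suc n) has_real_derivative gf A w y (pic A w n y)) (at y within {0..T})"
      by (rule DERIV_subset) auto
    then show "(pic A w (Suc n) has_derivative (*) (gf A w y (pic A w n y))) (at y within {0..T})"
      by (simp add: has_field_derivative_def)
  next
    fix e :: real assume e: "0 < e"
    from pic_unif[OF assms(1) T0 e, of A] obtain N where
      N: "\<forall>n\<ge>N. \<forall>y\<in>{0..T}. \<bar>pic A w n y - pu A w y\<bar> < e" by blast
    show "\<forall>\<^sub>F n in sequentially. \<forall>y\<in>{0..T}. \<forall>h. norm (gf A w y (pic A w n y) * h - gf A w y (pu A w y) * h) \<le> e * norm h"
      unfolding eventually_sequentially
    proof (intro exI allI impI ballI)
      fix n y h assume n: "N \<le> n" and y: "y \<in> {0..T}"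
      have "\<bar>gf A w y (pic A w n y) - gf A w y (pu A w y)\<bar> \<le> \<bar>pic A w n y - pu A w y\<bar>"
        by (rule gf_lip)
      also have "\<dots> \<le> e" using N n y by (meson less_imp_le)
      finally have "\<bar>gf A w y (pic A w n y) - gf A w y (pu A w y)\<bar> * \<bar>h\<bar> \<le> e * \<bar>h\<bar>"
        by (rule mult_right_mono) simp
      then show "norm (gf A w y (pic A w n y) * h - gf A w y (pu A w y) * h) \<le> e * norm h"
        by (simp add: left_diff_distrib[symmetric] abs_mult)
    qed
  next
    show "0 \<in> {0..T}" using T0 by simp
    show "(\<lambda>n. pic A w (Suc n) 0) \<longlonglongrightarrow> 1" by (simp add: pic_zero)
  qed
  then obtain G where G: "\<And>y. y \<in> {0..T} \<Longrightarrow> (\<lambda>n. pic A w (Suc n) y) \<longlonglongrightarrow> G y"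
    "\<And>y. y \<in> {0..T} \<Longrightarrow> (G has_derivative (*) (gf A w y (pu A w y))) (at y within {0..T})"
    by blast
  have Gpu: "G y = pu A w y" if y: "y \<in> {0..T}" for y
  proof (rule LIMSEQ_unique[OF G(1)[OF y]])
    have "(\<lambda>n. pic A w n y) \<longlonglongrightarrow> pu A w y"
      using pic_lim[OF assms(1), of y A] y by simp
    from LIMSEQ_Suc[OF this] show "(\<lambda>n. pic A w (Suc n) y) \<longlonglongrightarrow> pu A w y" .
  qed
  have xT: "x \<in> {0..T}" using assms T_def by simp
  have "(G has_real_derivative gf A w x (pu A w x)) (at x within {0..T})"
    using G(2)[OF xT] by (simp add: has_field_derivative_def)
  then have "(pu A w has_real_derivative gf A w x (pu A w x)) (at x within {0..T})"
    by (rule has_field_derivative_transform_within[where d=1]) (use xT Gpu in auto)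
  then show ?thesis by (rule within_ext[rotated 2]) (use assms T_def in auto)
qed

lemma pu_zero: "pu A w 0 = 1"
  by (simp add: pu_def pic_zero)

lemma pu_ge1:
  assumes "0 \<le> w" "0 \<le> t"
  shows "1 \<le> pu A w t"
proof -
  have "pu A w 0 \<le> pu A w t"
    by (rule mono_le[where f'="\<lambda>x. gf A w x (pu A w x)"]) 
       (use assms pu_deriv[OF assms(1)] in \<open>auto simp: gf_def\<close>)
  then show ?thesis by (simp add: pu_zero)
qed

lemma exU:
  assumes "0 \<le> w"
  shows "pu A w 0 = 1 \<and> (\<forall>t\<ge>0. 1 \<le> pu A w t \<and>
     (pu A w has_real_derivative sqrt (A\<^sup>2 * t\<^sup>2 + w) + 1 / pu A w t) (at t within {0..}))"
proof (intro conjI allI impI)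
  fix t :: real assume t: "0 \<le> t"
  show "1 \<le> pu A w t" by (rule pu_ge1[OF assms t])
  then have "gf A w t (pu A w t) = sqrt (A\<^sup>2 * t\<^sup>2 + w) + 1 / pu A w t"
    by (simp add: gf_def max_def)
  then show "(pu A w has_real_derivative sqrt (A\<^sup>2 * t\<^sup>2 + w) + 1 / pu A w t) (at t within {0..})"
    using pu_deriv[OF assms t, of A] by simp
qed (rule pu_zero)




lemma pu_d: "0 \<le> w \<Longrightarrow> 0 \<le> t \<Longrightarrow> (pu A w has_real_derivative sqrt (A\<^sup>2 * t\<^sup>2 + w) + 1 / pu A w t) (at t within {0..})"
  using exU by blast

lemma pu_cont: "0 \<le> w \<Longrightarrow> continuous_on {0..} (pu A w)"
  by (rule d0_cont[OF pu_d])

lemma sol_exists: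
  assumes "0 \<le> w"
  shows "ivp_sol A w (\<lambda>t. 1 / pu A w t)"
  unfolding ivp_sol_def
proof (intro conjI exI[of _ "\<lambda>t. - (1 / pu A w t)\<^sup>2 * (sqrt (A\<^sup>2 * t\<^sup>2 + w) + 1 / pu A w t)"] allI impI)
  show "1 / pu A w 0 = 1" by (simp add: pu_zero)
  have nz: "\<forall>x\<in>{0..}. pu A w x \<noteq> 0" using pu_ge1[OF assms, of _ A] by (metis atLeast_iff not_one_le_zero)
  show "continuous_on {0..} (\<lambda>t. - (1 / pu A w t)\<^sup>2 * (sqrt (A\<^sup>2 * t\<^sup>2 + w) + 1 / pu A w t))"
    using pu_cont[OF assms] nz by (intro continuous_intros) auto
  fix t :: real assume t: "0 \<le> t"
  have u1: "1 \<le> pu A w t" by (rule pu_ge1[OF assms t])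
  have "((\<lambda>t. inverse (pu A w t)) has_real_derivative
      - ((sqrt (A\<^sup>2 * t\<^sup>2 + w) + 1 / pu A w t) * inverse (pu A w t ^ Suc (Suc 0)))) (at t within {0..})"
    by (rule DERIV_inverse_fun[OF pu_d[OF assms t]]) (use u1 in auto)
  moreover have "- ((sqrt (A\<^sup>2 * t\<^sup>2 + w) + 1 / pu A w t) * inverse (pu A w t ^ Suc (Suc 0)))
      = - (1 / pu A w t)\<^sup>2 * (sqrt (A\<^sup>2 * t\<^sup>2 + w) + 1 / pu A w t)"
    by (simp add: field_simps power2_eq_square)
  ultimately show "((\<lambda>t. 1 / pu A w t) has_real_derivative - (1 / pu A w t)\<^sup>2 * (sqrt (A\<^sup>2 * t\<^sup>2 + w) + 1 / pu A w t)) (at t within {0..})"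
    by (simp add: inverse_eq_divide)
qed simp

lemma sol_d:
  assumes "ivp_sol A w v" "0 \<le> t"
  shows "(v has_real_derivative - (v t)\<^sup>2 * (sqrt (A\<^sup>2 * t\<^sup>2 + w) + v t)) (at t within {0..})"
  using assms unfolding ivp_sol_def by metis

lemma uniq:
  assumes s1: "ivp_sol A w v1" and s2: "ivp_sol A w v2" and t: "0 \<le> t"
  shows "v1 t = v2 t"
proof -
  have c1: "continuous_on {0..} v1" by (rule d0_cont[OF sol_d[OF s1]])
  have c2: "continuous_on {0..} v2" by (rule d0_cont[OF sol_d[OF s2]])
  define K where "K t = (v1 t + v2 t) * sqrt (A\<^sup>2 * t\<^sup>2 + w) + (v1 t)\<^sup>2 + v1 t * v2 t + (v2 t)\<^sup>2" for t
  have cK: "continuous_on {0..} K" unfolding K_def using c1 c2 by (intro continuous_intros)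
  define Kp where "Kp t = integral {0..t} K" for t
  have dK: "(Kp has_real_derivative K x) (at x within {0..})" if "0 \<le> x" for x
    unfolding Kp_def[abs_def] by (rule prim_deriv[OF cK that])
  define D where "D t = (v1 t - v2 t) * exp (Kp t)" for t
  have dD: "(D has_real_derivative 0) (at x within {0..})" if x: "0 \<le> x" for x
  proof -
    have "(D has_real_derivative
       (- (v1 x)\<^sup>2 * (sqrt (A\<^sup>2 * x\<^sup>2 + w) + v1 x) - - (v2 x)\<^sup>2 * (sqrt (A\<^sup>2 * x\<^sup>2 + w) + v2 x)) * exp (Kp x)
        + (exp (Kp x) * K x) * (v1 x - v2 x)) (at x within {0..})"
      unfolding D_def[abs_def]
      by (intro DERIV_mult DERIV_diff sol_d[OF s1 x] sol_d[OF s2 x] DERIV_chain2[OF DERIV_exp] dK x)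
    moreover have "(- (v1 x)\<^sup>2 * (sqrt (A\<^sup>2 * x\<^sup>2 + w) + v1 x) - - (v2 x)\<^sup>2 * (sqrt (A\<^sup>2 * x\<^sup>2 + w) + v2 x)) * exp (Kp x)
        + (exp (Kp x) * K x) * (v1 x - v2 x) = 0"
      unfolding K_def by (simp add: algebra_simps power2_eq_square power3_eq_cube)
    ultimately show ?thesis by simp
  qed
  have D0: "D 0 = 0" using s1 s2 unfolding D_def ivp_sol_def by simp
  have "D 0 \<le> D t" by (rule mono_le[OF dD _ t]) auto
  moreover have "(\<lambda>x. - D x) 0 \<le> (\<lambda>x. - D x) t"
    by (rule mono_le[where f'="\<lambda>x. - 0", OF _ _ t]) (use DERIV_minus[OF dD] in auto)
  ultimately have "D t = 0" using D0 by simp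
  then show ?thesis unfolding D_def by simp
qed




lemma pu_pos: "0 \<le> w \<Longrightarrow> 0 \<le> t \<Longrightarrow> 0 < pu A w t"
  using pu_ge1[of w t A] by simp

lemma pu_strict_t:
  assumes "0 \<le> w" "0 \<le> s" "s < t"
  shows "pu A w s < pu A w t"
proof (rule mono_lt[OF pu_d[OF assms(1)] assms(2,3)])
  fix x assume "s < x" "x < t"
  then have "0 < pu A w x" using pu_pos[OF assms(1)] assms(2) by simp
  then have a: "0 < 1 / pu A w x" by simp
  have b: "0 \<le> sqrt (A\<^sup>2 * x\<^sup>2 + w)" by (rule real_sqrt_ge_zero) (use assms(1) in simp)
  show "0 < sqrt (A\<^sup>2 * x\<^sup>2 + w) + 1 / pu A w x" by (rule add_nonneg_pos[OF b a])
qed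

lemma pu_strict_w:
  assumes w1: "0 \<le> w1" and w12: "w1 < w2" and t: "0 < t"
  shows "pu A w1 t < pu A w2 t"
proof -
  have w2: "0 \<le> w2" using w1 w12 by simp
  let ?U1 = "pu A w1" and ?U2 = "pu A w2"
  define k where "k x = 1 / (?U1 x * ?U2 x)" for x
  have nz: "\<forall>x\<in>{0..}. ?U1 x * ?U2 x \<noteq> 0"
  proof
    fix x :: real assume "x \<in> {0..}"
    then have "0 \<le> x" by simp
    then show "?U1 x * ?U2 x \<noteq> 0" using pu_pos[OF w1 \<open>0 \<le> x\<close>, of A] pu_pos[OF w2 \<open>0 \<le> x\<close>, of A] by simp
  qed
  have ck: "continuous_on {0..} k" unfolding k_def
    using pu_cont[OF w1] pu_cont[OF w2] nz by (intro continuous_intros) auto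
  define Kp where "Kp t = integral {0..t} k" for t
  have dK: "(Kp has_real_derivative k x) (at x within {0..})" if "0 \<le> x" for x
    unfolding Kp_def[abs_def] by (rule prim_deriv[OF ck that])
  define D where "D t = (?U2 t - ?U1 t) * exp (Kp t)" for t
  define E where "E x = ((sqrt (A\<^sup>2 * x\<^sup>2 + w2) + 1 / ?U2 x) - (sqrt (A\<^sup>2 * x\<^sup>2 + w1) + 1 / ?U1 x)) * exp (Kp x)
        + (exp (Kp x) * k x) * (?U2 x - ?U1 x)" for x
  have dD: "(D has_real_derivative E x) (at x within {0..})" if x: "0 \<le> x" for x
    unfolding D_def[abs_def] E_def
    by (intro DERIV_mult DERIV_diff pu_d w1 w2 x DERIV_chain2[OF DERIV_exp] dK)
  have Epos: "0 < E x" if x: "0 \<le> x" for x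
  proof -
    have "E x = exp (Kp x) * (sqrt (A\<^sup>2 * x\<^sup>2 + w2) - sqrt (A\<^sup>2 * x\<^sup>2 + w1))"
      unfolding E_def k_def using pu_pos[OF w1 x, of A] pu_pos[OF w2 x, of A]
      by (simp add: field_simps)
    moreover have "sqrt (A\<^sup>2 * x\<^sup>2 + w1) < sqrt (A\<^sup>2 * x\<^sup>2 + w2)" using w12 by simp
    ultimately show ?thesis by simp
  qed
  have "D 0 < D t" by (rule mono_lt[OF dD]) (use t Epos in auto)
  moreover have "D 0 = 0" unfolding D_def by (simp add: pu_zero)
  ultimately show ?thesis unfolding D_def by (simp add: zero_less_mult_iff)
qed

lemma pu_mono_w:
  assumes "0 \<le> w1" "w1 \<le> w2" "0 \<le> t"
  shows "pu A w1 t \<le> pu A w2 t"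
proof (cases "w1 < w2 \<and> 0 < t")
  case True then show ?thesis using pu_strict_w[OF assms(1)] by (simp add: less_imp_le)
next
  case False
  then have "w1 = w2 \<or> t = 0" using assms by auto
  then show ?thesis by (auto simp: pu_zero)
qed

lemma sqrt_sub: "0 \<le> a \<Longrightarrow> 0 \<le> w1 \<Longrightarrow> w1 \<le> w2 \<Longrightarrow> sqrt (a + w2) - sqrt (a + w1) \<le> sqrt (w2 - w1)"
proof -
  assume h: "0 \<le> a" "0 \<le> w1" "w1 \<le> w2"
  have "(sqrt (a + w2))\<^sup>2 \<le> (sqrt (a + w1) + sqrt (w2 - w1))\<^sup>2"
    using h by (simp add: power2_sum)
  then have "sqrt (a + w2) \<le> sqrt (a + w1) + sqrt (w2 - w1)"
    by (rule power2_le_imp_le) (use h in simp)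
  then show ?thesis by simp
qed

lemma pu_diff:
  assumes w1: "0 \<le> w1" and w12: "w1 \<le> w2" and t: "0 \<le> t"
  shows "pu A w2 t - pu A w1 t \<le> t * sqrt (w2 - w1)"
proof -
  have w2: "0 \<le> w2" using w1 w12 by simp
  let ?U1 = "pu A w1" and ?U2 = "pu A w2"
  define f where "f x = x * sqrt (w2 - w1) - (?U2 x - ?U1 x)" for x
  define E where "E x = 1 * sqrt (w2 - w1) - ((sqrt (A\<^sup>2 * x\<^sup>2 + w2) + 1 / ?U2 x) - (sqrt (A\<^sup>2 * x\<^sup>2 + w1) + 1 / ?U1 x))" for x
  have df: "(f has_real_derivative E x) (at x within {0..})" if x: "0 \<le> x" for x
    unfolding f_def[abs_def] E_def
    by (intro DERIV_diff DERIV_cmult_right DERIV_ident pu_d w1 w2 x)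
  have "f 0 \<le> f t"
  proof (rule mono_le[OF df])
    show "(0::real) \<le> 0" by simp
    show "0 \<le> t" by (rule t)
  next
    fix x :: real assume x: "0 < x" "x < t"
    have "?U1 x \<le> ?U2 x" by (rule pu_mono_w[OF w1 w12]) (use x in simp)
    then have "1 / ?U2 x \<le> 1 / ?U1 x" using pu_pos[OF w1, of x A] x
      by (simp add: frac_le)
    moreover have "sqrt (A\<^sup>2 * x\<^sup>2 + w2) - sqrt (A\<^sup>2 * x\<^sup>2 + w1) \<le> sqrt (w2 - w1)"
      by (rule sqrt_sub) (use w1 w12 in auto)
    ultimately show "0 \<le> E x" unfolding E_def by simp
  qed
  then show ?thesis unfolding f_def by (simp add: pu_zero)
qed

lemma pu_absdiff:
  assumes "0 \<le> w1" "0 \<le> w2" "0 \<le> t"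
  shows "\<bar>pu A w2 t - pu A w1 t\<bar> \<le> t * sqrt \<bar>w2 - w1\<bar>"
proof (cases "w1 \<le> w2")
  case True
  have a: "pu A w2 t - pu A w1 t \<le> t * sqrt (w2 - w1)" by (rule pu_diff[OF assms(1) True assms(3)])
  have b: "pu A w1 t \<le> pu A w2 t" by (rule pu_mono_w[OF assms(1) True assms(3)])
  show ?thesis using a b True by simp
next
  case False
  then have h: "w2 \<le> w1" by simp
  have a: "pu A w1 t - pu A w2 t \<le> t * sqrt (w1 - w2)" by (rule pu_diff[OF assms(2) h assms(3)])
  have b: "pu A w2 t \<le> pu A w1 t" by (rule pu_mono_w[OF assms(2) h assms(3)])
  show ?thesis using a b h by simp
qed

lemma xs_deriv:
  assumes "0 < A\<^sup>2 * x\<^sup>2 + w"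
  shows "((\<lambda>x. x * sqrt (A\<^sup>2 * x\<^sup>2 + w)) has_real_derivative
     sqrt (A\<^sup>2 * x\<^sup>2 + w) + A\<^sup>2 * x\<^sup>2 / sqrt (A\<^sup>2 * x\<^sup>2 + w)) (at x)"
proof -
  have i: "((\<lambda>x. A\<^sup>2 * x\<^sup>2 + w) has_real_derivative A\<^sup>2 * (2 * x)) (at x)"
    by (auto intro!: derivative_eq_intros)
  have "((\<lambda>x. x * sqrt (A\<^sup>2 * x\<^sup>2 + w)) has_real_derivative
     1 * sqrt (A\<^sup>2 * x\<^sup>2 + w) + (inverse (sqrt (A\<^sup>2 * x\<^sup>2 + w)) / 2 * (A\<^sup>2 * (2 * x))) * x) (at x)"
    by (intro DERIV_mult DERIV_ident DERIV_chain2[OF DERIV_real_sqrt[OF assms] i])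
  moreover have "1 * sqrt (A\<^sup>2 * x\<^sup>2 + w) + (inverse (sqrt (A\<^sup>2 * x\<^sup>2 + w)) / 2 * (A\<^sup>2 * (2 * x))) * x
     = sqrt (A\<^sup>2 * x\<^sup>2 + w) + A\<^sup>2 * x\<^sup>2 / sqrt (A\<^sup>2 * x\<^sup>2 + w)"
    by (simp add: field_simps power2_eq_square)
  ultimately show ?thesis by simp
qed

lemma lin_aux: fixes S Q W P :: real shows "S - Q = W \<Longrightarrow> 0 \<le> W \<Longrightarrow> 0 < P \<Longrightarrow> 0 < S + P - 0 - (S + Q) / 2"
  by (simp add: field_simps)

lemma pu_bound:
  assumes A: "A \<noteq> 0" and w: "0 \<le> w" and t: "0 < t"
  shows "1 + t * sqrt (A\<^sup>2 * t\<^sup>2 + w) / 2 < pu A w t"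
proof -
  define f where "f x = pu A w x - 1 - x * sqrt (A\<^sup>2 * x\<^sup>2 + w) / 2" for x
  have "f 0 < f t"
  proof (rule DERIV_pos_imp_increasing_open[OF t])
    have cu: "continuous_on {0..t} (pu A w)" by (rule continuous_on_subset[OF pu_cont[OF w]]) auto
    show "continuous_on {0..t} f" unfolding f_def
      using cu by (intro continuous_intros) auto
    fix x :: real assume x: "0 < x" "x < t"
    have pos: "0 < A\<^sup>2 * x\<^sup>2 + w" using A x w by (simp add: add_pos_nonneg)
    have sp: "0 < sqrt (A\<^sup>2 * x\<^sup>2 + w)" using pos by simp
    have "(f has_real_derivative (sqrt (A\<^sup>2 * x\<^sup>2 + w) + 1 / pu A w x) - 0 -
        (sqrt (A\<^sup>2 * x\<^sup>2 + w) + A\<^sup>2 * x\<^sup>2 / sqrt (A\<^sup>2 * x\<^sup>2 + w)) / 2) (at x)"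
      unfolding f_def[abs_def]
      by (intro DERIV_diff DERIV_cdivide d0_at[OF x(1)] pu_d w xs_deriv pos DERIV_const) (use x in auto)
    moreover have "0 < (sqrt (A\<^sup>2 * x\<^sup>2 + w) + 1 / pu A w x) - 0 -
        (sqrt (A\<^sup>2 * x\<^sup>2 + w) + A\<^sup>2 * x\<^sup>2 / sqrt (A\<^sup>2 * x\<^sup>2 + w)) / 2"
    proof -
      have sq: "(sqrt (A\<^sup>2 * x\<^sup>2 + w))\<^sup>2 = A\<^sup>2 * x\<^sup>2 + w" using pos by simp
      have "(sqrt (A\<^sup>2 * x\<^sup>2 + w) - A\<^sup>2 * x\<^sup>2 / sqrt (A\<^sup>2 * x\<^sup>2 + w)) = w / sqrt (A\<^sup>2 * x\<^sup>2 + w)"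
        using sp sq by (simp add: field_simps power2_eq_square)
      moreover have "0 \<le> w / sqrt (A\<^sup>2 * x\<^sup>2 + w)" using w sp by simp
      moreover have "0 < 1 / pu A w x" using pu_pos[OF w, of x A] x by simp
      ultimately show ?thesis by (rule lin_aux)
    qed
    ultimately show "\<exists>y. DERIV f x :> y \<and> 0 < y" by blast
  qed
  then show ?thesis unfolding f_def by (simp add: pu_zero)
qed




theorem lemma4p1:
  fixes A :: real
  assumes "A > 0"
  shows "(\<forall>w\<ge>0. (\<exists>v. ivp_sol A w v) \<and>
            (\<forall>v1 v2. ivp_sol A w v1 \<longrightarrow> ivp_sol A w v2 \<longrightarrow> (\<forall>t\<ge>0. v1 t = v2 t)))
       \<and> (\<forall>V :: real \<Rightarrow> real \<Rightarrow> real. (\<forall>w\<ge>0. ivp_sol A w (V w)) \<longrightarrow>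
            (\<forall>w\<ge>0. \<forall>t\<ge>0. 0 < V w t \<and> V w t \<le> 1)
          \<and> (\<forall>w\<ge>0. \<forall>s t. 0 \<le> s \<longrightarrow> s < t \<longrightarrow> V w t < V w s)
          \<and> (\<forall>t>0. \<forall>w1 w2. 0 \<le> w1 \<longrightarrow> w1 < w2 \<longrightarrow> V w2 t < V w1 t)
          \<and> (\<forall>t>0. \<forall>w\<ge>0. V w t < 2 / (2 + t * sqrt (A\<^sup>2 * t\<^sup>2 + w)))
          \<and> (\<forall>w\<ge>0. (V w \<longlongrightarrow> 0) at_top)
          \<and> (\<forall>w0\<ge>0. \<forall>e>0. \<exists>d>0. \<forall>w\<ge>0. \<bar>w - w0\<bar> < d \<longrightarrow>
                 (\<forall>t>0. \<bar>V w t - V w0 t\<bar> \<le> e)))"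
proof -
  have A0: "A \<noteq> 0" using assms by simp
  have P1: "\<forall>w\<ge>0. (\<exists>v. ivp_sol A w v) \<and>
            (\<forall>v1 v2. ivp_sol A w v1 \<longrightarrow> ivp_sol A w v2 \<longrightarrow> (\<forall>t\<ge>0. v1 t = v2 t))"
    using sol_exists uniq by blast
  have P2: "\<forall>V :: real \<Rightarrow> real \<Rightarrow> real. (\<forall>w\<ge>0. ivp_sol A w (V w)) \<longrightarrow>
            (\<forall>w\<ge>0. \<forall>t\<ge>0. 0 < V w t \<and> V w t \<le> 1)
          \<and> (\<forall>w\<ge>0. \<forall>s t. 0 \<le> s \<longrightarrow> s < t \<longrightarrow> V w t < V w s)
          \<and> (\<forall>t>0. \<forall>w1 w2. 0 \<le> w1 \<longrightarrow> w1 < w2 \<longrightarrow> V w2 t < V w1 t)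
          \<and> (\<forall>t>0. \<forall>w\<ge>0. V w t < 2 / (2 + t * sqrt (A\<^sup>2 * t\<^sup>2 + w)))
          \<and> (\<forall>w\<ge>0. (V w \<longlongrightarrow> 0) at_top)
          \<and> (\<forall>w0\<ge>0. \<forall>e>0. \<exists>d>0. \<forall>w\<ge>0. \<bar>w - w0\<bar> < d \<longrightarrow>
                 (\<forall>t>0. \<bar>V w t - V w0 t\<bar> \<le> e))"
  proof (intro allI impI)
    fix V :: "real \<Rightarrow> real \<Rightarrow> real"
    assume hV: "\<forall>w\<ge>0. ivp_sol A w (V w)"
    have Veq: "V w t = 1 / pu A w t" if "0 \<le> w" "0 \<le> t" for w t
      using uniq[OF hV[rule_format, OF that(1)] sol_exists[OF that(1)] that(2)] by simp
    have Vpos: "0 < V w t" if "0 \<le> w" "0 \<le> t" for w t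
      using Veq[OF that] pu_pos[OF that, of A] by simp
    have bnd: "V w t < 2 / (2 + t * sqrt (A\<^sup>2 * t\<^sup>2 + w))" if w: "0 \<le> w" and t: "0 < t" for w t
    proof -
      have u: "1 + t * sqrt (A\<^sup>2 * t\<^sup>2 + w) / 2 < pu A w t" by (rule pu_bound[OF A0 w t])
      have "0 \<le> sqrt (A\<^sup>2 * t\<^sup>2 + w)" by (rule real_sqrt_ge_zero) (use w in simp)
      then have "0 \<le> t * sqrt (A\<^sup>2 * t\<^sup>2 + w)" using t by simp
      then have p: "0 < 1 + t * sqrt (A\<^sup>2 * t\<^sup>2 + w) / 2" by simp
      have "1 / pu A w t < 1 / (1 + t * sqrt (A\<^sup>2 * t\<^sup>2 + w) / 2)"
        by (rule divide_strict_left_mono[OF u]) (use p u in auto)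
      also have "\<dots> = 2 / (2 + t * sqrt (A\<^sup>2 * t\<^sup>2 + w))" by (simp add: field_simps)
      finally show ?thesis using Veq[OF w] t by simp
    qed
    have small: "V w t \<le> 2 / (A * t)" if w: "0 \<le> w" and t: "1 \<le> t" for w t
    proof -
      have "A * t \<le> sqrt (A\<^sup>2 * t\<^sup>2 + w)"
      proof -
        have "sqrt ((A * t)\<^sup>2) \<le> sqrt (A\<^sup>2 * t\<^sup>2 + w)" using w by (simp add: power_mult_distrib)
        then show ?thesis using assms t by simp
      qed
      then have "A * t \<le> t * sqrt (A\<^sup>2 * t\<^sup>2 + w)"
        using t assms by (smt (verit) mult_le_cancel_left1 mult.commute mult_left_mono)
      then have le: "A * t \<le> 2 + t * sqrt (A\<^sup>2 * t\<^sup>2 + w)" by simp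
      have "2 / (2 + t * sqrt (A\<^sup>2 * t\<^sup>2 + w)) \<le> 2 / (A * t)"
      proof (rule divide_left_mono[OF le])
        have "0 < A * t" using assms t by simp
        then show "0 < (2 + t * sqrt (A\<^sup>2 * t\<^sup>2 + w)) * (A * t)" using le by simp
      qed simp
      then show ?thesis using bnd[OF w, of t] t by simp
    qed
    show "(\<forall>w\<ge>0. \<forall>t\<ge>0. 0 < V w t \<and> V w t \<le> 1)
          \<and> (\<forall>w\<ge>0. \<forall>s t. 0 \<le> s \<longrightarrow> s < t \<longrightarrow> V w t < V w s)
          \<and> (\<forall>t>0. \<forall>w1 w2. 0 \<le> w1 \<longrightarrow> w1 < w2 \<longrightarrow> V w2 t < V w1 t)
          \<and> (\<forall>t>0. \<forall>w\<ge>0. V w t < 2 / (2 + t * sqrt (A\<^sup>2 * t\<^sup>2 + w)))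
          \<and> (\<forall>w\<ge>0. (V w \<longlongrightarrow> 0) at_top)
          \<and> (\<forall>w0\<ge>0. \<forall>e>0. \<exists>d>0. \<forall>w\<ge>0. \<bar>w - w0\<bar> < d \<longrightarrow>
                 (\<forall>t>0. \<bar>V w t - V w0 t\<bar> \<le> e))"
    proof (intro conjI)
      show "\<forall>w\<ge>0. \<forall>t\<ge>0. 0 < V w t \<and> V w t \<le> 1"
      proof (intro allI impI conjI)
        fix w t :: real assume "0 \<le> w" "0 \<le> t"
        then show "0 < V w t" "V w t \<le> 1" using Vpos Veq pu_ge1[of w t A] by auto
      qed
      show "\<forall>w\<ge>0. \<forall>s t. 0 \<le> s \<longrightarrow> s < t \<longrightarrow> V w t < V w s"
      proof (intro allI impI)
        fix w s t :: real assume h: "0 \<le> w" "0 \<le> s" "s < t"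
        have "pu A w s < pu A w t" by (rule pu_strict_t[OF h])
        then have "1 / pu A w t < 1 / pu A w s"
          using pu_pos[OF h(1,2), of A] by (simp add: frac_less2)
        then show "V w t < V w s" using Veq h by simp
      qed
      show "\<forall>t>0. \<forall>w1 w2. 0 \<le> w1 \<longrightarrow> w1 < w2 \<longrightarrow> V w2 t < V w1 t"
      proof (intro allI impI)
        fix t w1 w2 :: real assume h: "0 < t" "0 \<le> w1" "w1 < w2"
        have "pu A w1 t < pu A w2 t" by (rule pu_strict_w[OF h(2,3,1)])
        then have "1 / pu A w2 t < 1 / pu A w1 t"
          using pu_pos[OF h(2), of t A] h by (simp add: frac_less2)
        then show "V w2 t < V w1 t" using Veq h by simp
      qed
      show "\<forall>t>0. \<forall>w\<ge>0. V w t < 2 / (2 + t * sqrt (A\<^sup>2 * t\<^sup>2 + w))"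
        using bnd by blast
      show "\<forall>w\<ge>0. (V w \<longlongrightarrow> 0) at_top"
      proof (intro allI impI)
        fix w :: real assume w: "0 \<le> w"
        have lim: "((\<lambda>t. 2 / (A * t)) \<longlongrightarrow> 0) at_top"
          by (intro tendsto_divide_0[OF tendsto_const] filterlim_at_top_imp_at_infinity
              filterlim_tendsto_pos_mult_at_top[OF tendsto_const assms filterlim_ident])
        show "(V w \<longlongrightarrow> 0) at_top"
        proof (rule tendsto_sandwich[OF _ _ tendsto_const lim])
          show "\<forall>\<^sub>F t in at_top. 0 \<le> V w t"
            using eventually_ge_at_top[of 0] by eventually_elim (use Vpos w in \<open>auto intro: less_imp_le\<close>)
          show "\<forall>\<^sub>F t in at_top. V w t \<le> 2 / (A * t)"
            using eventually_ge_at_top[of 1] by eventually_elim (use small w in auto)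
        qed
      qed
      show "\<forall>w0\<ge>0. \<forall>e>0. \<exists>d>0. \<forall>w\<ge>0. \<bar>w - w0\<bar> < d \<longrightarrow> (\<forall>t>0. \<bar>V w t - V w0 t\<bar> \<le> e)"
      proof (intro allI impI)
        fix w0 e :: real assume w0: "0 \<le> w0" and e: "0 < e"
        define T where "T = max 1 (2 / (A * e))"
        have T1: "1 \<le> T" unfolding T_def by simp
        have "2 / (A * e) \<le> T" unfolding T_def by simp
        then have "2 / e \<le> A * T" using assms e by (simp add: field_simps)
        then have "2 / (A * T) \<le> 2 / (2 / e)"
          by (intro divide_left_mono) (use e assms T1 in auto)
        then have ATe: "2 / (A * T) \<le> e" using e by simp
        define d where "d = (e / T)\<^sup>2"
        have d0: "0 < d" unfolding d_def using e T1 by simp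
        show "\<exists>d>0. \<forall>w\<ge>0. \<bar>w - w0\<bar> < d \<longrightarrow> (\<forall>t>0. \<bar>V w t - V w0 t\<bar> \<le> e)"
        proof (intro exI[of _ d] conjI d0 allI impI)
          fix w t :: real assume w: "0 \<le> w" and wd: "\<bar>w - w0\<bar> < d" and t: "0 < t"
          show "\<bar>V w t - V w0 t\<bar> \<le> e"
          proof (cases "t \<le> T")
            case True
            have "\<bar>V w t - V w0 t\<bar> = \<bar>1 / pu A w t - 1 / pu A w0 t\<bar>"
              using Veq w w0 t by simp
            also have "\<dots> \<le> \<bar>pu A w t - pu A w0 t\<bar>"
              by (rule inv_lip) (use pu_ge1 w w0 t in auto)
            also have "\<dots> \<le> t * sqrt \<bar>w - w0\<bar>"
              by (rule pu_absdiff) (use w w0 t in auto)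
            also have "\<dots> \<le> T * (e / T)"
            proof (rule mult_mono)
              have "sqrt \<bar>w - w0\<bar> \<le> sqrt d" using wd by simp
              also have "sqrt d = e / T" unfolding d_def using e T1 by simp
              finally show "sqrt \<bar>w - w0\<bar> \<le> e / T" .
            qed (use True T1 in auto)
            also have "\<dots> = e" using T1 by simp
            finally show ?thesis .
          next
            case False
            then have tT: "T < t" by simp
            have "2 / (A * t) \<le> 2 / (A * T)"
              by (rule divide_left_mono) (use assms tT T1 in auto)
            then have le: "2 / (A * t) \<le> e" using ATe by simp
            have "V w t \<le> e" "V w0 t \<le> e" using small[OF w, of t] small[OF w0, of t] le tT T1 by auto
            moreover have "0 < V w t" "0 < V w0 t" using Vpos w w0 t by auto
            ultimately show ?thesis by simp
          qed
        qed
      qed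
    qed
  qed
  show ?thesis using P1 P2 by blast
qed


end
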